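(* Assume (a1)–(a3) with constants $L,\beta$, and suppose in addition that $H$ is twice continuously differentiable with bounded Hessian: there is $M>0$ with $\|\nabla^2H(y)\|_2\le M$ for all $y$. Let $\gamma>0$ and let $\{(x^t,y^t,z^t)\}_{t\ge0}$ be generated by the DYS iteration. Then there exists $\tau>0$ such that for all $t\ge1$, $$\mathrm{dist}\big(0,\partial\Theta_\gamma(x^t,y^t,z^t)\big)\le\tau\,\|y^{t+1}-y^t\|,$$ where $\partial\Theta_\gamma$ is the limiting subdifferential of $\Theta_\gamma$ as a function of $(x,y,z)\in\mathbb{R}^{3n}$.
   Context: Assumptions: (a1) $F:\mathbb{R}^n\to\mathbb{R}$ is differentiable with $L$-Lipschitz gradient; (a2) $G:\mathbb{R}^n\to(-\infty,\infty]$ is proper, lower semicontinuous, and $\arg\min_y\{G(y)+\frac1{2\gamma}\|y-x\|^2\}\neq\emptyset$ for all $x$ and $\gamma>0$; (a3) $H:\mathbb{R}^n\to\mathbb{R}$ is differentiable with $\beta$-Lipschitz gradient. DYS iteration: fix $\gamma>0$, $x^0$; for $t\ge0$, $y^{t+1}\in\arg\min_y\{F(y)+\frac{1}{2\gamma}\|y-x^t\|^2\}$, $z^{t+1}\in\arg\min_z\{G(z)+\frac{1}{2\gamma}\|z-(2y^{t+1}-\gamma\nabla H(y^{t+1})-x^t)\|^2\}$, $x^{t+1}=x^t+(z^{t+1}-y^{t+1})$. Energy function: $\Theta_\gamma(x,y,z)=F(y)+G(z)+H(y)+\tfrac{1}{2\gamma}\|2y-z-x-\gamma\nabla H(y)\|^2-\tfrac{1}{2\gamma}\|x-y+\gamma\nabla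 H(y)\|^2-\tfrac1\gamma\|y-z\|^2$. Limiting subdifferential of a proper $f$ at $x\in\mathrm{dom}f$: $v\in\partial f(x)$ iff there exist $x^k\to x$ with $f(x^k)\to f(x)$ and $v^k\to v$ such that $\liminf_{z\to x^k}\frac{f(z)-f(x^k)-\langle v^k,z-x^k\rangle}{\|z-x^k\|}\ge0$ for each $k$. *)

theory Defs
  imports "HOL-Analysis.Analysis"
begin

text \<open>Extended-real valued functions f :: 'a \<Rightarrow> ereal model functions into (-\<infinity>,+\<infinity>].\<close>

definition proper_fun :: "('a \<Rightarrow> ereal) \<Rightarrow> bool" where
  "proper_fun f \<longleftrightarrow> (\<forall>x. f x \<noteq> -\<infinity>) \<and> (\<exists>x. f x \<noteq> \<infinity>)"

definition lsc_fun :: "('a::topological_space \<Rightarrow> ereal) \<Rightarrow> bool" where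
  "lsc_fun f \<longleftrightarrow> (\<forall>x. f x \<le> Liminf (at x) f)"

definition frechet_subgrad :: "('a::real_inner \<Rightarrow> ereal) \<Rightarrow> 'a \<Rightarrow> 'a \<Rightarrow> bool" where
  "frechet_subgrad f x v \<longleftrightarrow> \<bar>f x\<bar> \<noteq> \<infinity> \<and>
     Liminf (at x) (\<lambda>z. (f z - f x - ereal (v \<bullet> (z - x))) / ereal (norm (z - x))) \<ge> 0"

definition limiting_subdiff :: "('a::real_inner \<Rightarrow> ereal) \<Rightarrow> 'a \<Rightarrow> 'a set" where
  "limiting_subdiff f x = {v. \<bar>f x\<bar> \<noteq> \<infinity> \<and>
     (\<exists>xs vs. xs \<longlonglongrightarrow> x \<and> (\<lambda>k. f (xs k)) \<longlonglongrightarrow> f x \<and> vs \<longlonglongrightarrow> v \<and>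
        (\<forall>k. frechet_subgrad f (xs k) (vs k)))}"

definition Theta :: "('a::euclidean_space \<Rightarrow> real) \<Rightarrow> ('a \<Rightarrow> ereal) \<Rightarrow> ('a \<Rightarrow> real) \<Rightarrow> ('a \<Rightarrow> 'a)
    \<Rightarrow> real \<Rightarrow> 'a \<times> 'a \<times> 'a \<Rightarrow> ereal" where
  "Theta F G H gradH \<gamma> p = (case p of (x, y, z) \<Rightarrow>
     ereal (F y + H y
       + (1 / (2 * \<gamma>)) * (norm (2 *\<^sub>R y - z - x - \<gamma> *\<^sub>R gradH y))\<^sup>2
       - (1 / (2 * \<gamma>)) * (norm (x - y + \<gamma> *\<^sub>R gradH y))\<^sup>2
       - (1 / \<gamma>) * (norm (y - z))\<^sup>2) + G z)"

end

theory Submission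
  imports Defs
begin

lemma frechet_sum:
  fixes S :: "'b::{real_inner,perfect_space} \<Rightarrow> real" and Gz :: "'b \<Rightarrow> ereal"
  assumes dS: "(S has_derivative D) (at p)"
    and Tdef: "\<And>q. T q = ereal (S q) + Gz q"
    and Gp: "Gz p = ereal g0"
    and Glb: "\<And>q. Gz q \<ge> ereal (g0 + (v \<bullet> (q - p) - D (q - p)) - c * (norm (q - p))\<^sup>2)"
  shows "frechet_subgrad T p v"
proof -
  define r where "r q = (S q - S p - D (q - p)) / norm (q - p) - c * norm (q - p)" for q
  have "((\<lambda>q. inverse (norm (q - p)) *\<^sub>R (S q - S p - D (q - p))) \<longlongrightarrow> 0) (at p)"
    using dS by (simp add: has_derivative_at_within)
  then have t1: "((\<lambda>q. (S q - S p - D (q - p)) / norm (q - p)) \<longlongrightarrow> 0) (at p)"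
    by (simp add: divide_inverse mult.commute)
  have t2: "((\<lambda>q. c * norm (q - p)) \<longlongrightarrow> 0) (at p)"
  proof -
    have "((\<lambda>q. c * norm (q - p)) \<longlongrightarrow> c * norm (p - p)) (at p)"
      by (intro tendsto_intros)
    then show ?thesis by simp
  qed
  have "(r \<longlongrightarrow> 0) (at p)" unfolding r_def using tendsto_diff[OF t1 t2] by simp
  then have "((\<lambda>q. ereal (r q)) \<longlongrightarrow> ereal 0) (at p)" by (simp add: lim_ereal)
  then have L0: "Liminf (at p) (\<lambda>q. ereal (r q)) = 0"
    by (subst lim_imp_Liminf) (auto simp: zero_ereal_def)
  have ev: "eventually (\<lambda>q. ereal (r q) \<le> (T q - T p - ereal (v \<bullet> (q - p))) / ereal (norm (q - p))) (at p)"
    unfolding eventually_at_filter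
  proof (intro always_eventually allI impI)
    fix q assume "q \<noteq> p"
    then have n: "norm (q - p) > 0" by simp
    show "ereal (r q) \<le> (T q - T p - ereal (v \<bullet> (q - p))) / ereal (norm (q - p))"
    proof (cases "Gz q")
      case (real g)
      have gl: "g \<ge> g0 + (v \<bullet> (q - p) - D (q - p)) - c * (norm (q - p))\<^sup>2" using Glb[of q] real by simp
      have "r q \<le> (S q + g - (S p + g0) - v \<bullet> (q - p)) / norm (q - p)"
      proof -
        have "r q = (S q - S p - D (q - p) - c * (norm (q - p))\<^sup>2) / norm (q - p)"
          unfolding r_def using n by (simp add: field_simps power2_eq_square)
        also have "\<dots> \<le> (S q + g - (S p + g0) - v \<bullet> (q - p)) / norm (q - p)"
          using n gl by (intro divide_right_mono) auto
        finally show ?thesis .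
      qed
      then show ?thesis using real n by (simp add: Tdef Gp)
    next
      case PInf
      then show ?thesis using n by (simp add: Tdef Gp)
    next
      case MInf
      then show ?thesis using Glb[of q] by simp
    qed
  qed
  show ?thesis unfolding frechet_subgrad_def
    using Liminf_mono[OF ev] L0 by (simp add: Tdef Gp)
qed


lemma S_deriv:
  fixes F H :: "'a::euclidean_space \<Rightarrow> real"
    and gradF gradH :: "'a \<Rightarrow> 'a"
    and hessH :: "'a \<Rightarrow> 'a \<Rightarrow>\<^sub>L 'a"
  assumes a1_grad: "\<And>u. (F has_derivative (\<lambda>h. gradF u \<bullet> h)) (at u)"
    and a3_grad: "\<And>u. (H has_derivative (\<lambda>h. gradH u \<bullet> h)) (at u)"
    and hess: "\<And>u. (gradH has_derivative blinfun_apply (hessH u)) (at u)"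
    and gn: "\<gamma> \<noteq> 0"
  shows "((\<lambda>q. case q of (x,y,z) \<Rightarrow> F y + H y
       + (1 / (2 * \<gamma>)) * ((2 *\<^sub>R y - z - x - \<gamma> *\<^sub>R gradH y) \<bullet> (2 *\<^sub>R y - z - x - \<gamma> *\<^sub>R gradH y))
       - (1 / (2 * \<gamma>)) * ((x - y + \<gamma> *\<^sub>R gradH y) \<bullet> (x - y + \<gamma> *\<^sub>R gradH y))
       - (1 / \<gamma>) * ((y - z) \<bullet> (y - z))) has_derivative 
     (\<lambda>h. case h of (hx,hy,hz) \<Rightarrow> gradF Y \<bullet> hy + gradH Y \<bullet> hy
       + (1/\<gamma>) * ((2 *\<^sub>R Y - Z - X - \<gamma> *\<^sub>R gradH Y) \<bullet> (2 *\<^sub>R hy - hz - hx - \<gamma> *\<^sub>R hessH Y hy))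
       - (1/\<gamma>) * ((X - Y + \<gamma> *\<^sub>R gradH Y) \<bullet> (hx - hy + \<gamma> *\<^sub>R hessH Y hy))
       - (2/\<gamma>) * ((Y - Z) \<bullet> (hy - hz)))) (at (X,Y,Z))"
proof -
  define p where "p = (X,Y,Z)"
  have cF: "\<And>g g'. (g has_derivative g') (at p) \<Longrightarrow> ((\<lambda>q. F (g q)) has_derivative (\<lambda>h. gradF (g p) \<bullet> g' h)) (at p)"
    using has_derivative_compose[OF _ a1_grad] by blast
  have cH: "\<And>g g'. (g has_derivative g') (at p) \<Longrightarrow> ((\<lambda>q. H (g q)) has_derivative (\<lambda>h. gradH (g p) \<bullet> g' h)) (at p)"
    using has_derivative_compose[OF _ a3_grad] by blast
  have cG: "\<And>g g'. (g has_derivative g') (at p) \<Longrightarrow> ((\<lambda>q. gradH (g q)) has_derivative (\<lambda>h. hessH (g p) (g' h))) (at p)"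
    using has_derivative_compose[OF _ hess] by blast
  have "((\<lambda>q. case q of (x,y,z) \<Rightarrow> F y + H y
       + (1 / (2 * \<gamma>)) * ((2 *\<^sub>R y - z - x - \<gamma> *\<^sub>R gradH y) \<bullet> (2 *\<^sub>R y - z - x - \<gamma> *\<^sub>R gradH y))
       - (1 / (2 * \<gamma>)) * ((x - y + \<gamma> *\<^sub>R gradH y) \<bullet> (x - y + \<gamma> *\<^sub>R gradH y))
       - (1 / \<gamma>) * ((y - z) \<bullet> (y - z))) has_derivative 
     (\<lambda>h. case h of (hx,hy,hz) \<Rightarrow> gradF Y \<bullet> hy + gradH Y \<bullet> hy
       + (1/\<gamma>) * ((2 *\<^sub>R Y - Z - X - \<gamma> *\<^sub>R gradH Y) \<bullet> (2 *\<^sub>R hy - hz - hx - \<gamma> *\<^sub>R hessH Y hy))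
       - (1/\<gamma>) * ((X - Y + \<gamma> *\<^sub>R gradH Y) \<bullet> (hx - hy + \<gamma> *\<^sub>R hessH Y hy))
       - (2/\<gamma>) * ((Y - Z) \<bullet> (hy - hz)))) (at p)"
    unfolding case_prod_beta
    apply (rule derivative_eq_intros cF cH cG refl | simp)+
    apply (rule ext)
    apply (simp add: p_def inner_diff_left inner_diff_right inner_add_left inner_add_right inner_commute algebra_simps)
    apply (simp add: gn field_simps)
    done
  then show ?thesis by (simp add: p_def)
qed


lemma adjoint_bound:
  fixes f :: "'a::euclidean_space \<Rightarrow> 'a"
  assumes "linear f" and "\<And>u. norm (f u) \<le> M * norm u" and "M \<ge> 0"
  shows "norm (adjoint f c) \<le> M * norm c"
proof (cases "adjoint f c = 0")
  case True then show ?thesis using assms by simp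
next
  case False
  define a where "a = adjoint f c"
  have "(norm a)\<^sup>2 = f a \<bullet> c" unfolding a_def power2_norm_eq_inner
    using adjoint_works[OF assms(1)] by simp
  also have "\<dots> \<le> norm (f a) * norm c" by (rule norm_cauchy_schwarz)
  also have "\<dots> \<le> M * norm a * norm c" using assms(2)[of a] by (simp add: mult_right_mono)
  finally have "norm a * norm a \<le> (M * norm c) * norm a" by (simp add: power2_eq_square algebra_simps)
  moreover have "norm a > 0" using False a_def by simp
  ultimately show ?thesis unfolding a_def[symmetric] by simp
qed

lemma fermat_step:
  fixes F :: "'a::euclidean_space \<Rightarrow> real" and gradF :: "'a \<Rightarrow> 'a"
  assumes a1_grad: "\<And>u. (F has_derivative (\<lambda>h. gradF u \<bullet> h)) (at u)"
    and g: "\<gamma> > 0"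
    and min: "\<And>u. F Y + (1 / (2 * \<gamma>)) * (norm (Y - X))\<^sup>2 \<le> F u + (1 / (2 * \<gamma>)) * (norm (u - X))\<^sup>2"
  shows "gradF Y = (1/\<gamma>) *\<^sub>R (X - Y)"
proof -
  have d: "((\<lambda>u. F u + (1 / (2 * \<gamma>)) * ((u - X) \<bullet> (u - X))) has_derivative
        (\<lambda>h. gradF Y \<bullet> h + (1/\<gamma>) * ((Y - X) \<bullet> h))) (at Y)"
    apply (rule derivative_eq_intros a1_grad refl | simp)+
    apply (rule ext) using g by (simp add: inner_commute field_simps)
  have "(\<lambda>h. gradF Y \<bullet> h + (1/\<gamma>) * ((Y - X) \<bullet> h)) = (\<lambda>h. 0)"
    by (rule differential_zero_maxmin[OF _ open_UNIV d]) (use min in \<open>auto simp: power2_norm_eq_inner\<close>)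
  then have "gradF Y \<bullet> e + (1/\<gamma>) * ((Y - X) \<bullet> e) = 0" for e by metis
  moreover have "gradF Y \<bullet> e + (1/\<gamma>) * ((Y - X) \<bullet> e) = (gradF Y - (1/\<gamma>) *\<^sub>R (X - Y)) \<bullet> e" for e
    by (simp add: inner_diff_left inner_diff_right algebra_simps)
  ultimately have "(gradF Y - (1/\<gamma>) *\<^sub>R (X - Y)) \<bullet> (gradF Y - (1/\<gamma>) *\<^sub>R (X - Y)) = 0" by metis
  then show ?thesis by simp
qed



lemma ident:
  fixes gradF gradH :: "'a::euclidean_space \<Rightarrow> 'a" and f :: "'a \<Rightarrow> 'a"
  assumes gn: "\<gamma> \<noteq> 0"
    and hX: "X = X0 + (Z - Y)" and hgF: "gradF Y = (1/\<gamma>) *\<^sub>R (X0 - Y)"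
    and adj: "hy \<bullet> AD = f hy \<bullet> (Y - Z)"
  shows "((1/\<gamma>) *\<^sub>R (Z - Y)) \<bullet> hx + ((1/\<gamma>) *\<^sub>R (Y - Z) - AD) \<bullet> hy + ((1/\<gamma>) *\<^sub>R (Y - Z)) \<bullet> hz
     - (gradF Y \<bullet> hy + gradH Y \<bullet> hy
       + (1/\<gamma>) * ((2 *\<^sub>R Y - Z - X - \<gamma> *\<^sub>R gradH Y) \<bullet> (2 *\<^sub>R hy - hz - hx - \<gamma> *\<^sub>R f hy))
       - (1/\<gamma>) * ((X - Y + \<gamma> *\<^sub>R gradH Y) \<bullet> (hx - hy + \<gamma> *\<^sub>R f hy))
       - (2/\<gamma>) * ((Y - Z) \<bullet> (hy - hz)))
     = ((1/\<gamma>) *\<^sub>R (2 *\<^sub>R Y - \<gamma> *\<^sub>R gradH Y - X0 - Z)) \<bullet> hz"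
proof -
  have adj2: "AD \<bullet> hy = Y \<bullet> f hy - Z \<bullet> f hy" using adj inner_commute[of AD hy] inner_commute[of "f hy" Y] inner_commute[of "f hy" Z] inner_diff_right[of "f hy" Y Z] by linarith
  show ?thesis
  using gn unfolding hX hgF inner_diff_right inner_add_right inner_diff_left inner_add_left
  by (simp add: adj2 inner_commute inner_diff_left inner_add_left inner_diff_right inner_add_right field_simps)
qed

theorem mainTheorem5:
  fixes F H :: "'a::euclidean_space \<Rightarrow> real"
    and G :: "'a \<Rightarrow> ereal"
    and gradF gradH :: "'a \<Rightarrow> 'a"
    and hessH :: "'a \<Rightarrow> 'a \<Rightarrow>\<^sub>L 'a"
    and L \<beta> M \<gamma> :: real
    and x y z :: "nat \<Rightarrow> 'a"
  assumes a1_grad: "\<And>u. (F has_derivative (\<lambda>h. gradF u \<bullet> h)) (at u)"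
    and a1_lip: "L-lipschitz_on UNIV gradF"
    and a2_proper: "proper_fun G"
    and a2_lsc: "lsc_fun G"
    and a2_prox: "\<And>w (g::real). g > 0 \<Longrightarrow>
        \<exists>v. \<forall>u. G v + ereal ((1 / (2 * g)) * (norm (v - w))\<^sup>2) \<le> G u + ereal ((1 / (2 * g)) * (norm (u - w))\<^sup>2)"
    and a3_grad: "\<And>u. (H has_derivative (\<lambda>h. gradH u \<bullet> h)) (at u)"
    and a3_lip: "\<beta>-lipschitz_on UNIV gradH"
    and hess: "\<And>u. (gradH has_derivative blinfun_apply (hessH u)) (at u)"
    and hess_cont: "continuous_on UNIV hessH"
    and M_pos: "M > 0"
    and hess_bound: "\<And>u. norm (hessH u) \<le> M"
    and gamma_pos: "\<gamma> > 0"
    and step_y: "\<And>t u. F (y (Suc t)) + (1 / (2 * \<gamma>)) * (norm (y (Suc t) - x t))\<^sup>2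
                   \<le> F u + (1 / (2 * \<gamma>)) * (norm (u - x t))\<^sup>2"
    and step_z: "\<And>t u. G (z (Suc t)) + ereal ((1 / (2 * \<gamma>)) *
                     (norm (z (Suc t) - (2 *\<^sub>R y (Suc t) - \<gamma> *\<^sub>R gradH (y (Suc t)) - x t)))\<^sup>2)
                   \<le> G u + ereal ((1 / (2 * \<gamma>)) *
                     (norm (u - (2 *\<^sub>R y (Suc t) - \<gamma> *\<^sub>R gradH (y (Suc t)) - x t)))\<^sup>2)"
    and step_x: "\<And>t. x (Suc t) = x t + (z (Suc t) - y (Suc t))"
  shows "\<exists>\<tau>>0. \<forall>t\<ge>1.
           limiting_subdiff (Theta F G H gradH \<gamma>) (x t, y t, z t) \<noteq> {} \<and>
           infdist 0 (limiting_subdiff (Theta F G H gradH \<gamma>) (x t, y t, z t))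
             \<le> \<tau> * norm (y (Suc t) - y t)"
proof -
  have L0: "L \<ge> 0" using a1_lip by (rule lipschitz_on_nonneg)
  have gn: "\<gamma> \<noteq> 0" using gamma_pos by simp
  define \<tau> where "\<tau> = (3/\<gamma> + M) * (1 + \<gamma> * L)"
  have \<tau>pos: "\<tau> > 0" unfolding \<tau>_def using gamma_pos M_pos L0 by (intro mult_pos_pos add_pos_nonneg) auto
  have gF: "\<And>k. gradF (y (Suc k)) = (1/\<gamma>) *\<^sub>R (x k - y (Suc k))"
    by (rule fermat_step[OF a1_grad gamma_pos step_y])
  have xk: "\<And>k. x k = y (Suc k) + \<gamma> *\<^sub>R gradF (y (Suc k))"
    using gn by (simp add: gF)
  obtain u0 where u0: "G u0 \<noteq> \<infinity>" using a2_proper unfolding proper_fun_def by blast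
  have Gm: "\<And>u. G u \<noteq> -\<infinity>" using a2_proper unfolding proper_fun_def by blast
  define S where "S q = (case q of (x,y,z) \<Rightarrow> F y + H y
       + (1 / (2 * \<gamma>)) * ((2 *\<^sub>R y - z - x - \<gamma> *\<^sub>R gradH y) \<bullet> (2 *\<^sub>R y - z - x - \<gamma> *\<^sub>R gradH y))
       - (1 / (2 * \<gamma>)) * ((x - y + \<gamma> *\<^sub>R gradH y) \<bullet> (x - y + \<gamma> *\<^sub>R gradH y))
       - (1 / \<gamma>) * ((y - z) \<bullet> (y - z)))" for q :: "'a \<times> 'a \<times> 'a"
  have ThS: "\<And>q. Theta F G H gradH \<gamma> q = ereal (S q) + G (snd (snd q))"
    unfolding Theta_def S_def by (auto simp: power2_norm_eq_inner split: prod.splits)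
  have main: "limiting_subdiff (Theta F G H gradH \<gamma>) (x t, y t, z t) \<noteq> {} \<and>
           infdist 0 (limiting_subdiff (Theta F G H gradH \<gamma>) (x t, y t, z t))
             \<le> \<tau> * norm (y (Suc t) - y t)" if "t \<ge> 1" for t
  proof -
    obtain s where ts: "t = Suc s" using \<open>t \<ge> 1\<close> by (cases t) auto
    define X Y Z X0 where "X = x t" "Y = y t" "Z = z t" "X0 = x s"
    have hX: "X = X0 + (Z - Y)" unfolding X_Y_Z_X0_def ts by (rule step_x)
    have hgF: "gradF Y = (1/\<gamma>) *\<^sub>R (X0 - Y)" unfolding X_Y_Z_X0_def ts by (rule gF)
    have dn: "norm (X - X0) \<le> (1 + \<gamma> * L) * norm (y (Suc t) - Y)"
    proof -
      have "X - X0 = (y (Suc t) - Y) + \<gamma> *\<^sub>R (gradF (y (Suc t)) - gradF Y)"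
        using xk[of t] xk[of s] unfolding X_Y_Z_X0_def ts by (simp add: algebra_simps)
      then have "norm (X - X0) \<le> norm (y (Suc t) - Y) + \<gamma> * norm (gradF (y (Suc t)) - gradF Y)"
        using gamma_pos by (metis abs_of_pos norm_scaleR norm_triangle_ineq)
      also have "\<dots> \<le> norm (y (Suc t) - Y) + \<gamma> * (L * norm (y (Suc t) - Y))"
        using lipschitz_onD[OF a1_lip, of "y (Suc t)" Y] gamma_pos
        by (intro add_left_mono mult_left_mono) (auto simp: dist_norm)
      finally show ?thesis by (simp add: algebra_simps)
    qed
    define P where "P = 2 *\<^sub>R Y - \<gamma> *\<^sub>R gradH Y - X0"
    define w where "w = (1/\<gamma>) *\<^sub>R (P - Z)"
    have sz: "G Z + ereal ((1 / (2 * \<gamma>)) * (norm (Z - P))\<^sup>2) \<le> G u + ereal ((1 / (2 * \<gamma>)) * (norm (u - P))\<^sup>2)" for u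
      using step_z[of s u] unfolding P_def X_Y_Z_X0_def ts .
    have "G Z \<noteq> \<infinity>" using sz[of u0] u0 by auto
    then obtain g0 where g0: "G Z = ereal g0" using Gm[of Z] by (cases "G Z") auto
    have Glb: "G u \<ge> ereal (g0 + w \<bullet> (u - Z) - (1/(2*\<gamma>)) * (norm (u - Z))\<^sup>2)" for u
    proof (cases "G u")
      case (real g)
      have "g0 + (1 / (2 * \<gamma>)) * (norm (Z - P))\<^sup>2 \<le> g + (1 / (2 * \<gamma>)) * (norm (u - P))\<^sup>2"
        using sz[of u] real g0 by simp
      moreover have "(1 / (2 * \<gamma>)) * (norm (Z - P))\<^sup>2 - (1 / (2 * \<gamma>)) * (norm (u - P))\<^sup>2
          = w \<bullet> (u - Z) - (1/(2*\<gamma>)) * (norm (u - Z))\<^sup>2"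
        unfolding w_def power2_norm_eq_inner using gn
        by (simp add: inner_diff_left inner_diff_right inner_commute field_simps)
      ultimately show ?thesis using real by simp
    qed (use Gm in auto)
    define p where "p = (X, Y, Z)"
    define D where "D = (\<lambda>h. case h of (hx,hy,hz) \<Rightarrow> gradF Y \<bullet> hy + gradH Y \<bullet> hy
       + (1/\<gamma>) * ((2 *\<^sub>R Y - Z - X - \<gamma> *\<^sub>R gradH Y) \<bullet> (2 *\<^sub>R hy - hz - hx - \<gamma> *\<^sub>R hessH Y hy))
       - (1/\<gamma>) * ((X - Y + \<gamma> *\<^sub>R gradH Y) \<bullet> (hx - hy + \<gamma> *\<^sub>R hessH Y hy))
       - (2/\<gamma>) * ((Y - Z) \<bullet> (hy - hz)))"
    have dS: "(S has_derivative D) (at p)"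
      unfolding p_def D_def S_def by (rule S_deriv[OF a1_grad a3_grad hess gn])
    define AD where "AD = adjoint (blinfun_apply (hessH Y)) (Y - Z)"
    have lin: "linear (blinfun_apply (hessH Y))"
      by (simp add: blinfun.bounded_linear_right bounded_linear.linear)
    define v where "v = ((1/\<gamma>) *\<^sub>R (Z - Y), (1/\<gamma>) *\<^sub>R (Y - Z) - AD, (1/\<gamma>) *\<^sub>R (Y - Z))"
    have vD: "v \<bullet> h - D h = w \<bullet> snd (snd h)" for h
    proof -
      obtain hx hy hz where h: "h = (hx, hy, hz)" by (cases h) auto
      have adj: "hy \<bullet> AD = hessH Y hy \<bullet> (Y - Z)" unfolding AD_def by (rule adjoint_works[OF lin])
      show ?thesis unfolding h v_def D_def w_def P_def
        using ident[where f="blinfun_apply (hessH Y)" and hy=hy and AD=AD and hx=hx and hz=hz and gradH=gradH and gradF=gradF and Y=Y and Z=Z and X=X and X0=X0 and \<gamma>=\<gamma>, OF gn hX hgF adj] by (simp add: algebra_simps)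
    qed
    have fs: "frechet_subgrad (Theta F G H gradH \<gamma>) p v"
    proof (rule frechet_sum[OF dS])
      show "Theta F G H gradH \<gamma> q = ereal (S q) + G (snd (snd q))" for q by (rule ThS)
      show "G (snd (snd p)) = ereal g0" using g0 by (simp add: p_def)
      show "ereal (g0 + (v \<bullet> (q - p) - D (q - p)) - 1/(2*\<gamma>) * (norm (q - p))\<^sup>2) \<le> G (snd (snd q))" for q
      proof -
        have "norm (snd (snd q) - Z) \<le> norm (q - p)"
        proof -
          obtain a b c where q: "q = (a, b, c)" by (cases q) auto
          have "norm (c - Z) \<le> norm (a - X, b - Y, c - Z)"
            using norm_snd_le[where x="a - X" and y="(b - Y, c - Z)"] norm_snd_le[where x="b - Y" and y="c - Z"] by linarith
          then show ?thesis by (simp add: q p_def)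
        qed
        then have "(norm (snd (snd q) - Z))\<^sup>2 \<le> (norm (q - p))\<^sup>2" by (simp add: power_mono)
        then have sq2: "1/(2*\<gamma>) * (norm (snd (snd q) - Z))\<^sup>2 \<le> 1/(2*\<gamma>) * (norm (q - p))\<^sup>2"
          using gamma_pos by (intro mult_left_mono) auto
        have e: "v \<bullet> (q - p) - D (q - p) = w \<bullet> (snd (snd q) - Z)" using vD[of "q - p"] by (simp add: p_def)
        have "g0 + (v \<bullet> (q - p) - D (q - p)) - 1/(2*\<gamma>) * (norm (q - p))\<^sup>2
            \<le> g0 + w \<bullet> (snd (snd q) - Z) - (1/(2*\<gamma>)) * (norm (snd (snd q) - Z))\<^sup>2"
          using e sq2 by linarith
        then show ?thesis using Glb[of "snd (snd q)"] by (meson ereal_less_eq(3) order_trans)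
      qed
    qed
    have vin: "v \<in> limiting_subdiff (Theta F G H gradH \<gamma>) p"
    proof -
      have "\<exists>xs vs. xs \<longlonglongrightarrow> p \<and> (\<lambda>k. Theta F G H gradH \<gamma> (xs k)) \<longlonglongrightarrow> Theta F G H gradH \<gamma> p
          \<and> vs \<longlonglongrightarrow> v \<and> (\<forall>k. frechet_subgrad (Theta F G H gradH \<gamma>) (xs k) (vs k))"
        apply (rule exI[of _ "\<lambda>k. p"], rule exI[of _ "\<lambda>k. v"]) using fs by simp
      moreover have "\<bar>Theta F G H gradH \<gamma> p\<bar> \<noteq> \<infinity>" using fs unfolding frechet_subgrad_def by (rule conjunct1)
      ultimately show ?thesis unfolding limiting_subdiff_def mem_Collect_eq by blast
    qed
    have adb: "norm AD \<le> M * norm (Y - Z)" unfolding AD_def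
    proof (rule adjoint_bound[OF lin])
      fix u
      have "norm (hessH Y u) \<le> norm (hessH Y) * norm u" by (rule norm_blinfun)
      also have "\<dots> \<le> M * norm u" using hess_bound[of Y] by (rule mult_right_mono) simp
      finally show "norm (hessH Y u) \<le> M * norm u" .
    qed (use M_pos in simp)
    have "norm v \<le> norm ((1/\<gamma>) *\<^sub>R (Z - Y)) + (norm ((1/\<gamma>) *\<^sub>R (Y - Z) - AD) + norm ((1/\<gamma>) *\<^sub>R (Y - Z)))"
      unfolding v_def
      using norm_Pair_le[of "(1/\<gamma>) *\<^sub>R (Z - Y)" "((1/\<gamma>) *\<^sub>R (Y - Z) - AD, (1/\<gamma>) *\<^sub>R (Y - Z))"]
        norm_Pair_le[of "(1/\<gamma>) *\<^sub>R (Y - Z) - AD" "(1/\<gamma>) *\<^sub>R (Y - Z)"] by linarith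
    also have "\<dots> \<le> (1/\<gamma>) * norm (X - X0) + (((1/\<gamma>) * norm (X - X0) + M * norm (X - X0)) + (1/\<gamma>) * norm (X - X0))"
    proof -
      have e1: "norm (Z - Y) = norm (X - X0)" "norm (Y - Z) = norm (X - X0)"
        using hX by (simp_all add: norm_minus_commute)
      have "norm ((1/\<gamma>) *\<^sub>R (Y - Z) - AD) \<le> norm ((1/\<gamma>) *\<^sub>R (Y - Z)) + norm AD" by (rule norm_triangle_ineq4)
      then show ?thesis using adb e1 gamma_pos by simp
    qed
    also have "\<dots> = (3/\<gamma> + M) * norm (X - X0)" by (simp add: algebra_simps)
    also have "\<dots> \<le> (3/\<gamma> + M) * ((1 + \<gamma> * L) * norm (y (Suc t) - Y))"
      using dn gamma_pos M_pos by (intro mult_left_mono) auto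
    finally have nv: "norm v \<le> \<tau> * norm (y (Suc t) - y t)" unfolding \<tau>_def X_Y_Z_X0_def by simp
    have "infdist 0 (limiting_subdiff (Theta F G H gradH \<gamma>) p) \<le> dist 0 v" by (rule infdist_le[OF vin])
    then show ?thesis using vin nv unfolding p_def X_Y_Z_X0_def by auto
  qed
  show ?thesis using \<tau>pos main by blast
qed

end
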